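(* Let $\psi$ be a colouring, let $d\in\mathbb Z$, write $d^+=\max(d,0)$, and let $\xi\in\mathcal C_{d^+}$ be regular and summable. Then the series $\sum_{a\ge d^+}(X^-)^{a-d}(X^+)^a\xi^a(H)$ converges, for the $h$-adic topology, to a unique element $x\in U_h(\psi)$. Moreover $x$ is of degree $d$, and $\psi\ltimes\xi=\psi(x)$.
   Context: $\mathbb k$ is a field of characteristic zero, and $\mathbb k[[h]]$ is the ring of formal power series over $\mathbb k$. For a $\mathbb k$-vector space $V_0$, $V_0[[h]]$ denotes the module of formal series $\sum_{m\ge0}v_mh^m$ with $v_m\in V_0$. $\mathfrak a$ is the Lie algebra over $\mathbb k$ generated by $H,X^-,X^+$ subject to $[H,X^\pm]=\pm2X^\pm$. We set $U_h(\mathfrak a):=U(\mathfrak a)[[h]]$. A colouring is a sequence $\psi=(\psi^k)_{k\ge1}$ of functions $\psi^k:\mathbb Z\to\mathbb k[[h]]$ satisfying: - (C1) $\psi^k(n)\equiv k(n-k+1)\bmod h$; - (C2) $\psi^{n+1}(n)=0$ for all $n\ge0$; - (C3) $\psi^{n+k+1}(n)=\psi^k(-n-2)$ for all $k\ge1$ and all $n\ge0$. $V_h(n,\psi)$ is the representation of $U_h(\mathfrak a)$ on $(\bigoplus_{k\ge0}\mathbb k b_k)[[h]]$ with the following action: - $H.b_k=(n-2k)b_k$; - $X^-.b_k=b_{k+1}$; - $X^+.b_0=0$, and $X^+.b_k=\psi^k(n)b_{k-1}$ for $k\ge1$. $U_h(\psi)$ is the quotient of $U_h(\mathfrak a)$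 by the two-sided ideal of elements that act by zero on $V_h(n,\psi)$ for every $n\in\mathbb Z$. Sequences. For $d\in\mathbb N$, $\mathcal C_d$ is the $\mathbb k[[h]]$-module of sequences $f=(f^k)_{k\ge d}$ of functions $f^k:\mathbb Z\to\mathbb k[[h]]$. We write $f^k(n)=\sum_{m\ge0}f^k_m(n)h^m$ with $f^k_m:\mathbb Z\to\mathbb k$. - $f$ is summable if $f^k\to0$ $h$-adically, i.e. for each $m$ one has $f^k_m\equiv0$ for all sufficiently large $k$. - $f$ is regular if each $f^k_m$ is (the restriction of) a polynomial function of $n$, and for each $m$ the degree of $f^k_m$ is bounded independently of $k$. - For a regular $\xi$, set $\xi^a(H):=\sum_m\xi^a_m(H)h^m\in\mathbb k[H][[h]]$, viewed in $U_h(\psi)$. For a colouring $\psi$ and $\xi\in\mathcal C_d$ with $d\ge0$, define $\psi\ltimes\xi\in\mathcal C_d$ by $$(\psi\ltimes\xi)^k(n)=\sum_{a=d}^k\Big(\prod_{b=k-a+1}^k\psi^b(n)\Big)\xi^a(n-2k)\qquad(k\ge d),$$ where the empty product is $1$. Degree. An element $x\in U_h(\psi)$ is of degree $d\in\mathbb Z$ if, for every $n\in\mathbb Z$, two conditions hold in $V_h(n,\psi)$: - $x.b_k=0$ for $0\le k<d^+$; - $x.b_k=\psi(x)^k(n)\,b_{k-d}$ for some $\psi(x)^k(n)\in\mathbb k[[h]]$, for every $k\ge d^+$. In that case $\psi(x):=(\psi(x)^k)_{k\ge d^+}\in\mathcal C_{d^+}$. *)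

theory Defs
  imports "HOL-Computational_Algebra.Formal_Power_Series" "HOL-Computational_Algebra.Polynomial"
begin

text \<open>k[[h]] is modelled by the type 'k fps (formal power series, fps_X = h).\<close>

text \<open>psi k n = psi^k(n); the value at k = 0 is irrelevant.\<close>
definition colouring :: "(nat \<Rightarrow> int \<Rightarrow> 'k::field_char_0 fps) \<Rightarrow> bool" where
  "colouring \<psi> \<longleftrightarrow>
     (\<forall>k n. k \<ge> 1 \<longrightarrow> fps_nth (\<psi> k n) 0 = of_int (int k * (n - int k + 1))) \<and>
     (\<forall>n::nat. \<psi> (n + 1) (int n) = 0) \<and>
     (\<forall>k n::nat. k \<ge> 1 \<longrightarrow> \<psi> (n + k + 1) (int n) = \<psi> k (- int n - 2))"

datatype gen = Hg | Xm | Xp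

text \<open>A word [g1,...,gr] stands for the product g1 g2 ... gr.  An element of
  the (completed) free algebra on H, X^-, X^+ over k[[h]] is a function from words to
  k[[h]] such that, for every m, only finitely many words have nonzero h^m-coefficient.
  Since the relations of a hold in every V_h(n,psi), the image of this free algebra in
  the operators on all V_h(n,psi) coincides with the image of U_h(a), i.e. with U_h(psi).\<close>

definition uh_elem :: "(gen list \<Rightarrow> 'k::field_char_0 fps) \<Rightarrow> bool" where
  "uh_elem c \<longleftrightarrow> (\<forall>m. finite {w. fps_nth (c w) m \<noteq> 0})"

definition uh_word :: "gen list \<Rightarrow> gen list \<Rightarrow> 'k::field_char_0 fps" where
  "uh_word w = (\<lambda>v. if v = w then 1 else 0)"

definition uh_mult :: "(gen list \<Rightarrow> 'k::field_char_0 fps) \<Rightarrow> (gen list \<Rightarrow> 'k fps) \<Rightarrow> gen list \<Rightarrow> 'k fps" where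
  "uh_mult c1 c2 = (\<lambda>w. \<Sum>i\<le>length w. c1 (take i w) * c2 (drop i w))"

text \<open>Action of a generator on a monomial vector c * b_k of V_h(n,psi).\<close>
fun gen_act :: "(nat \<Rightarrow> int \<Rightarrow> 'k::field_char_0 fps) \<Rightarrow> int \<Rightarrow> gen \<Rightarrow> 'k fps \<times> nat \<Rightarrow> 'k fps \<times> nat" where
  "gen_act \<psi> n Hg (c, k) = (c * of_int (n - 2 * int k), k)"
| "gen_act \<psi> n Xm (c, k) = (c, Suc k)"
| "gen_act \<psi> n Xp (c, k) = (if k = 0 then (0, 0) else (c * \<psi> k n, k - 1))"

definition word_act :: "(nat \<Rightarrow> int \<Rightarrow> 'k::field_char_0 fps) \<Rightarrow> int \<Rightarrow> gen list \<Rightarrow> nat \<Rightarrow> 'k fps \<times> nat" where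
  "word_act \<psi> n w k = foldr (gen_act \<psi> n) w (1, k)"

text \<open>uh_mat psi c n k l = coefficient of b_l in c.b_k computed in V_h(n,psi).
  An element of U_h(psi) is determined by these coefficients (the action is
  k[[h]]-linear and h-adically continuous).\<close>
definition uh_mat :: "(nat \<Rightarrow> int \<Rightarrow> 'k::field_char_0 fps) \<Rightarrow> (gen list \<Rightarrow> 'k fps) \<Rightarrow> int \<Rightarrow> nat \<Rightarrow> nat \<Rightarrow> 'k fps" where
  "uh_mat \<psi> c n k l = Abs_fps (\<lambda>N.
     \<Sum>w\<in>{w. \<exists>i\<le>N. fps_nth (c w) i \<noteq> 0}.
       (if snd (word_act \<psi> n w k) = l then fps_nth (c w * fst (word_act \<psi> n w k)) N else 0))"

definition Uh_psi :: "(nat \<Rightarrow> int \<Rightarrow> 'k::field_char_0 fps) \<Rightarrow> (int \<Rightarrow> nat \<Rightarrow> nat \<Rightarrow> 'k fps) set" where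
  "Uh_psi \<psi> = {uh_mat \<psi> c | c. uh_elem c}"

definition hadic_conv :: "(nat \<Rightarrow> int \<Rightarrow> 'k::field_char_0 fps) \<Rightarrow> (nat \<Rightarrow> int \<Rightarrow> nat \<Rightarrow> nat \<Rightarrow> 'k fps) \<Rightarrow> (int \<Rightarrow> nat \<Rightarrow> nat \<Rightarrow> 'k fps) \<Rightarrow> bool" where
  "hadic_conv \<psi> S x \<longleftrightarrow>
     (\<forall>m. \<exists>N0. \<forall>N\<ge>N0. \<exists>y\<in>Uh_psi \<psi>. \<forall>n k l. x n k l - S N n k l = fps_X ^ m * y n k l)"

text \<open>xi a n = xi^a(n); elements of C_d only use indices a >= d.\<close>
definition summable_seq :: "nat \<Rightarrow> (nat \<Rightarrow> int \<Rightarrow> 'k::field_char_0 fps) \<Rightarrow> bool" where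
  "summable_seq d \<xi> \<longleftrightarrow> (\<forall>m. \<exists>K. \<forall>a\<ge>max K d. \<forall>n. fps_nth (\<xi> a n) m = 0)"

definition regular_seq :: "nat \<Rightarrow> (nat \<Rightarrow> int \<Rightarrow> 'k::field_char_0 fps) \<Rightarrow> bool" where
  "regular_seq d \<xi> \<longleftrightarrow> (\<forall>m. \<exists>D. \<forall>a\<ge>d. \<exists>P :: 'k poly.
      degree P \<le> D \<and> (\<forall>n. fps_nth (\<xi> a n) m = poly P (of_int n)))"

text \<open>The polynomial xi^a_m (unique, as k has characteristic zero).\<close>
definition xi_poly :: "(nat \<Rightarrow> int \<Rightarrow> 'k::field_char_0 fps) \<Rightarrow> nat \<Rightarrow> nat \<Rightarrow> 'k poly" where
  "xi_poly \<xi> a m = (SOME P. \<forall>n. fps_nth (\<xi> a n) m = poly P (of_int n))"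

text \<open>xi^a(H) = sum_m xi^a_m(H) h^m, as an element of U_h(a).\<close>
definition xi_H :: "(nat \<Rightarrow> int \<Rightarrow> 'k::field_char_0 fps) \<Rightarrow> nat \<Rightarrow> gen list \<Rightarrow> 'k fps" where
  "xi_H \<xi> a = (\<lambda>w. if w = replicate (length w) Hg
                    then Abs_fps (\<lambda>m. coeff (xi_poly \<xi> a m) (length w)) else 0)"

definition partial_sum :: "int \<Rightarrow> (nat \<Rightarrow> int \<Rightarrow> 'k::field_char_0 fps) \<Rightarrow> nat \<Rightarrow> gen list \<Rightarrow> 'k fps" where
  "partial_sum d \<xi> N = (\<lambda>w. \<Sum>a\<in>{nat (max d 0)..N}.
      uh_mult (uh_word (replicate (nat (int a - d)) Xm @ replicate a Xp)) (xi_H \<xi> a) w)"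

definition ltimes :: "(nat \<Rightarrow> int \<Rightarrow> 'k::field_char_0 fps) \<Rightarrow> nat \<Rightarrow> (nat \<Rightarrow> int \<Rightarrow> 'k fps) \<Rightarrow> nat \<Rightarrow> int \<Rightarrow> 'k fps" where
  "ltimes \<psi> d \<xi> k n = (\<Sum>a\<in>{d..k}. (\<Prod>b\<in>{k - a + 1..k}. \<psi> b n) * \<xi> a (n - 2 * int k))"

definition of_degree :: "(int \<Rightarrow> nat \<Rightarrow> nat \<Rightarrow> 'k::field_char_0 fps) \<Rightarrow> int \<Rightarrow> bool" where
  "of_degree x d \<longleftrightarrow> (\<forall>n k l.
     (k < nat (max d 0) \<longrightarrow> x n k l = 0) \<and>
     (k \<ge> nat (max d 0) \<and> int l \<noteq> int k - d \<longrightarrow> x n k l = 0))"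

definition psi_of :: "(int \<Rightarrow> nat \<Rightarrow> nat \<Rightarrow> 'k::field_char_0 fps) \<Rightarrow> int \<Rightarrow> nat \<Rightarrow> int \<Rightarrow> 'k fps" where
  "psi_of x d k n = x n k (nat (int k - d))"

end

theory Submission
  imports Defs
begin

notation fps_nth (infixl "$" 75)



lemma uh_mat_nth:
  assumes "finite A" "{w. \<exists>i\<le>N. fps_nth (c w) i \<noteq> 0} \<subseteq> A"
  shows "fps_nth (uh_mat \<psi> c n k l) N = (\<Sum>w\<in>A. if snd (word_act \<psi> n w k) = l
            then fps_nth (c w * fst (word_act \<psi> n w k)) N else 0)"
proof -
  have "fps_nth (uh_mat \<psi> c n k l) N = (\<Sum>w\<in>{w. \<exists>i\<le>N. fps_nth (c w) i \<noteq> 0}. if snd (word_act \<psi> n w k) = l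
            then fps_nth (c w * fst (word_act \<psi> n w k)) N else 0)"
    by (simp add: uh_mat_def)
  also have "\<dots> = (\<Sum>w\<in>A. if snd (word_act \<psi> n w k) = l
            then fps_nth (c w * fst (word_act \<psi> n w k)) N else 0)"
  proof (rule sum.mono_neutral_left[OF assms(1) assms(2)])
    show "\<forall>w\<in>A - {w. \<exists>i\<le>N. fps_nth (c w) i \<noteq> 0}. (if snd (word_act \<psi> n w k) = l
            then fps_nth (c w * fst (word_act \<psi> n w k)) N else 0) = 0"
      by (auto simp: fps_mult_nth intro!: sum.neutral)
  qed
  finally show ?thesis .
qed

lemma uh_mat_combo:
  assumes "uh_elem c1" "uh_elem c2"
  shows "uh_mat \<psi> (\<lambda>w. c1 w + fps_X ^ m * c2 w) n k l = uh_mat \<psi> c1 n k l + fps_X ^ m * uh_mat \<psi> c2 n k l"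
proof (rule fps_ext)
  fix N
  define S where "S c = {w. \<exists>i\<le>N. fps_nth (c w) i \<noteq> 0}" for c :: "gen list \<Rightarrow> 'a fps"
  have fin: "finite (S c)" if "uh_elem c" for c
  proof -
    have "S c = (\<Union>i\<le>N. {w. fps_nth (c w) i \<noteq> 0})" by (auto simp: S_def)
    thus ?thesis using that by (auto simp: uh_elem_def)
  qed
  let ?A = "S c1 \<union> S c2"
  have finA: "finite ?A" using fin assms by auto
  let ?f = "\<lambda>w. fst (word_act \<psi> n w k)" and ?s = "\<lambda>w. snd (word_act \<psi> n w k)"
  have sub: "{w. \<exists>i\<le>N. fps_nth (c1 w + fps_X ^ m * c2 w) i \<noteq> 0} \<subseteq> ?A"
    by (auto simp: S_def fps_X_power_mult_nth split: if_splits)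
  have "uh_mat \<psi> (\<lambda>w. c1 w + fps_X ^ m * c2 w) n k l $ N =
     (\<Sum>w\<in>?A. if ?s w = l then ((c1 w + fps_X ^ m * c2 w) * ?f w) $ N else 0)"
    by (rule uh_mat_nth[OF finA sub])
  also have "\<dots> = (\<Sum>w\<in>?A. if ?s w = l then (c1 w * ?f w) $ N else 0)
     + (\<Sum>w\<in>?A. if ?s w = l then (fps_X ^ m * (c2 w * ?f w)) $ N else 0)"
    by (subst sum.distrib[symmetric]) (auto intro!: sum.cong simp: distrib_right mult.assoc)
  also have "(\<Sum>w\<in>?A. if ?s w = l then (c1 w * ?f w) $ N else 0) = uh_mat \<psi> c1 n k l $ N"
    by (rule uh_mat_nth[symmetric]) (use finA in \<open>auto simp: S_def\<close>)
  also have "(\<Sum>w\<in>?A. if ?s w = l then (fps_X ^ m * (c2 w * ?f w)) $ N else 0)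
      = (fps_X ^ m * uh_mat \<psi> c2 n k l) $ N"
  proof (cases "N < m")
    case True
    have R: "(fps_X ^ m * uh_mat \<psi> c2 n k l) $ N = 0" using True by (simp add: fps_X_power_mult_nth)
    have L: "(\<Sum>w\<in>?A. if ?s w = l then (fps_X ^ m * (c2 w * ?f w)) $ N else 0) = 0"
    proof (rule sum.neutral, rule ballI)
      fix w
      show "(if ?s w = l then (fps_X ^ m * (c2 w * ?f w)) $ N else 0) = 0"
        using True by (simp add: fps_X_power_mult_nth)
    qed
    show ?thesis using L R by simp
  next
    case False
    have "(fps_X ^ m * uh_mat \<psi> c2 n k l) $ N = uh_mat \<psi> c2 n k l $ (N - m)"
      using False by (simp add: fps_X_power_mult_nth)
    also have "\<dots> = (\<Sum>w\<in>?A. if ?s w = l then (c2 w * ?f w) $ (N - m) else 0)"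
      by (rule uh_mat_nth) (use finA in \<open>auto simp: S_def\<close>)
    also have "\<dots> = (\<Sum>w\<in>?A. if ?s w = l then (fps_X ^ m * (c2 w * ?f w)) $ N else 0)"
    proof (rule sum.cong[OF refl])
      fix w
      show "(if ?s w = l then (c2 w * ?f w) $ (N - m) else 0) = (if ?s w = l then (fps_X ^ m * (c2 w * ?f w)) $ N else 0)"
        using False by (simp add: fps_X_power_mult_nth)
    qed
    finally show ?thesis by simp
  qed
  finally show "uh_mat \<psi> (\<lambda>w. c1 w + fps_X ^ m * c2 w) n k l $ N = (uh_mat \<psi> c1 n k l + fps_X ^ m * uh_mat \<psi> c2 n k l) $ N"
    by simp
qed

lemma hadic_unique:
  assumes "hadic_conv \<psi> S x" "hadic_conv \<psi> S x'"
  shows "x = x'"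
proof (intro ext fps_ext)
  fix n k l i
  obtain N0 where N0: "\<forall>N\<ge>N0. \<exists>y\<in>Uh_psi \<psi>. \<forall>n k l. x n k l - S N n k l = fps_X ^ Suc i * y n k l"
    using assms(1) unfolding hadic_conv_def by blast
  obtain N1 where N1: "\<forall>N\<ge>N1. \<exists>y\<in>Uh_psi \<psi>. \<forall>n k l. x' n k l - S N n k l = fps_X ^ Suc i * y n k l"
    using assms(2) unfolding hadic_conv_def by blast
  obtain y where y: "\<forall>n k l. x n k l - S (max N0 N1) n k l = fps_X ^ Suc i * y n k l"
    using N0[rule_format, of "max N0 N1"] by (meson max.cobounded1)
  obtain y' where y': "\<forall>n k l. x' n k l - S (max N0 N1) n k l = fps_X ^ Suc i * y' n k l"
    using N1[rule_format, of "max N0 N1"] by (meson max.cobounded2)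
  have "(x n k l - S (max N0 N1) n k l) $ i = 0" "(x' n k l - S (max N0 N1) n k l) $ i = 0"
    using y y' by (simp_all add: fps_X_power_mult_nth del: power_Suc)
  thus "x n k l $ i = x' n k l $ i" by simp
qed



lemma poly_int_eq:
  fixes P Q :: "'k::field_char_0 poly"
  assumes "\<And>n::int. poly P (of_int n) = poly Q (of_int n)"
  shows "P = Q"
proof (rule ccontr)
  assume "P \<noteq> Q"
  hence "P - Q \<noteq> 0" by simp
  hence fin: "finite {x. poly (P - Q) x = 0}" by (rule poly_roots_finite)
  have "range (of_int :: int \<Rightarrow> 'k) \<subseteq> {x. poly (P - Q) x = 0}" using assms by auto
  hence "finite (range (of_int :: int \<Rightarrow> 'k))" using fin finite_subset by blast
  moreover have "inj (of_int :: int \<Rightarrow> 'k)" by (auto simp: inj_on_def)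
  ultimately have "finite (UNIV :: int set)" using finite_imageD by blast
  thus False by simp
qed

lemma foldr_Hg: "foldr (gen_act \<psi> n) (replicate j Hg) (c, k) = (c * of_int (n - 2 * int k) ^ j, k)"
  by (induction j) (simp_all add: mult.assoc power_Suc2)

lemma foldr_Xm: "foldr (gen_act \<psi> n) (replicate p Xm) (c, k) = (c, k + p)"
  by (induction p) auto

lemma foldr_Xp: "foldr (gen_act \<psi> n) (replicate a Xp) (c, k) =
   (if a \<le> k then (c * (\<Prod>b\<in>{k - a + 1..k}. \<psi> b n), k - a) else (0, 0))"
proof (induction a)
  case 0 thus ?case by simp
next
  case (Suc a)
  show ?case
  proof (cases "Suc a \<le> k")
    case True
    have e: "k - Suc a + 1 = k - a" using True by simp
    have "(\<Prod>b\<in>{k - a..k}. \<psi> b n) = \<psi> (k - a) n * (\<Prod>b\<in>{Suc (k - a)..k}. \<psi> b n)"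
      by (rule prod.atLeast_Suc_atMost) simp
    then have "(\<Prod>b\<in>{k - Suc a + 1..k}. \<psi> b n) = (\<Prod>b\<in>{k - a + 1..k}. \<psi> b n) * \<psi> (k - a) n"
      using e by (simp add: mult.commute)
    moreover have "foldr (gen_act \<psi> n) (replicate (Suc a) Xp) (c, k) = gen_act \<psi> n Xp (foldr (gen_act \<psi> n) (replicate a Xp) (c, k))"
      by simp
    ultimately show ?thesis using True Suc.IH by (simp add: mult.assoc)
  next
    case False
    thus ?thesis using Suc by auto
  qed
qed

lemma uh_mult_word:
  "uh_mult (uh_word u) f w = (if take (length u) w = u then f (drop (length u) w) else 0)"
proof -
  have eq: "take i w = u \<longleftrightarrow> i = length u \<and> take (length u) w = u" if "i \<le> length w" for i
  proof
    assume "take i w = u"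
    moreover have "length (take i w) = i" using that by simp
    ultimately show "i = length u \<and> take (length u) w = u" by auto
  qed auto
  have "uh_mult (uh_word u) f w = (\<Sum>i\<le>length w. if i = length u then
           (if take (length u) w = u then f (drop (length u) w) else 0) else 0)"
    unfolding uh_mult_def uh_word_def
  proof (rule sum.cong[OF refl])
    fix i assume "i \<in> {..length w}"
    hence i: "i \<le> length w" by simp
    show "(if take i w = u then 1 else 0) * f (drop i w) = (if i = length u then
           (if take (length u) w = u then f (drop (length u) w) else 0) else 0)"
    proof (cases "i = length u")
      case True thus ?thesis by simp
    next
      case False
      hence "take i w \<noteq> u" using eq[OF i] by blast
      thus ?thesis using False by simp
    qed
  qed
  also have "\<dots> = (if length u \<le> length w then
           (if take (length u) w = u then f (drop (length u) w) else 0) else 0)"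
    by (subst sum.delta) auto
  also have "\<dots> = (if take (length u) w = u then f (drop (length u) w) else 0)"
  proof -
    have "take (length u) w = u \<Longrightarrow> length u \<le> length w"
      by (metis length_take min.cobounded2 min.commute)
    thus ?thesis by auto
  qed
  finally show ?thesis .
qed



locale ctx5 =
  fixes \<psi> :: "nat \<Rightarrow> int \<Rightarrow> 'k::field_char_0 fps" and d :: int and \<xi> :: "nat \<Rightarrow> int \<Rightarrow> 'k fps"
  assumes reg: "regular_seq (nat (max d 0)) \<xi>" and summ: "summable_seq (nat (max d 0)) \<xi>"
begin

abbreviation "dp \<equiv> nat (max d 0)"

definition Db :: "nat \<Rightarrow> nat" where
  "Db m = (SOME D. \<forall>a\<ge>dp. \<exists>P::'k poly. degree P \<le> D \<and> (\<forall>n. \<xi> a n $ m = poly P (of_int n)))"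

lemma Db: "\<forall>a\<ge>dp. \<exists>P::'k poly. degree P \<le> Db m \<and> (\<forall>n. \<xi> a n $ m = poly P (of_int n))"
proof -
  have "\<exists>D. \<forall>a\<ge>dp. \<exists>P::'k poly. degree P \<le> D \<and> (\<forall>n. \<xi> a n $ m = poly P (of_int n))"
    using reg unfolding regular_seq_def by blast
  thus ?thesis unfolding Db_def by (rule someI_ex)
qed

lemma xi_poly_eval: "dp \<le> a \<Longrightarrow> \<xi> a n $ m = poly (xi_poly \<xi> a m) (of_int n)"
proof -
  assume "dp \<le> a"
  then obtain P :: "'k poly" where "\<forall>n. \<xi> a n $ m = poly P (of_int n)" using Db by blast
  hence "\<exists>P :: 'k poly. \<forall>n. \<xi> a n $ m = poly P (of_int n)" by blast
  hence "\<forall>n. \<xi> a n $ m = poly (xi_poly \<xi> a m) (of_int n)" unfolding xi_poly_def by (rule someI_ex)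
  thus ?thesis by blast
qed

lemma xi_poly_deg: "dp \<le> a \<Longrightarrow> degree (xi_poly \<xi> a m) \<le> Db m"
proof -
  assume a: "dp \<le> a"
  then obtain P :: "'k poly" where P: "degree P \<le> Db m" "\<forall>n. \<xi> a n $ m = poly P (of_int n)" using Db by blast
  have "xi_poly \<xi> a m = P" by (rule poly_int_eq) (use P(2) xi_poly_eval[OF a] in auto)
  thus ?thesis using P(1) by simp
qed

definition Kb :: "nat \<Rightarrow> nat" where
  "Kb m = max dp (SOME K. \<forall>a\<ge>max K dp. \<forall>n. \<xi> a n $ m = 0)"

lemma Kb_ge: "dp \<le> Kb m" by (simp add: Kb_def)

lemma Kb: "Kb m \<le> a \<Longrightarrow> \<xi> a n $ m = 0"
proof -
  assume a: "Kb m \<le> a"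
  have "\<exists>K. \<forall>a\<ge>max K dp. \<forall>n. \<xi> a n $ m = 0" using summ unfolding summable_seq_def by blast
  hence "\<forall>a\<ge>max (SOME K. \<forall>a\<ge>max K dp. \<forall>n. \<xi> a n $ m = 0) dp. \<forall>n. \<xi> a n $ m = 0" by (rule someI_ex)
  thus ?thesis using a unfolding Kb_def by auto
qed

lemma xi_poly_zero: "Kb m \<le> a \<Longrightarrow> xi_poly \<xi> a m = 0"
proof -
  assume a: "Kb m \<le> a"
  hence "dp \<le> a" using Kb_ge[of m] by linarith
  show ?thesis by (rule poly_int_eq) (use Kb[OF a] xi_poly_eval[OF \<open>dp \<le> a\<close>] in auto)
qed

definition G :: "nat \<Rightarrow> nat \<Rightarrow> 'k fps" where "G a j = Abs_fps (\<lambda>m. coeff (xi_poly \<xi> a m) j)"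
definition u :: "nat \<Rightarrow> gen list" where "u a = replicate (nat (int a - d)) Xm @ replicate a Xp"
definition W :: "nat \<Rightarrow> nat \<Rightarrow> gen list" where "W a j = u a @ replicate j Hg"
definition tm :: "nat \<Rightarrow> gen list \<Rightarrow> 'k fps" where "tm a = uh_mult (uh_word (u a)) (xi_H \<xi> a)"

lemma G_nth: "G a j $ i = coeff (xi_poly \<xi> a i) j" by (simp add: G_def)

lemma len_u: "length (u a) = nat (int a - d) + a" by (simp add: u_def)

lemma tm_eq: "tm a w = (if \<exists>j. w = W a j then G a (length w - length (u a)) else 0)"
proof -
  have iff: "(take (length (u a)) w = u a \<and> drop (length (u a)) w = replicate (length (drop (length (u a)) w)) Hg)
     \<longleftrightarrow> (\<exists>j. w = W a j)"
  proof
    assume h: "take (length (u a)) w = u a \<and> drop (length (u a)) w = replicate (length (drop (length (u a)) w)) Hg"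
    have "w = take (length (u a)) w @ drop (length (u a)) w" by simp
    also have "\<dots> = W a (length (drop (length (u a)) w))" using h unfolding W_def by metis
    finally show "\<exists>j. w = W a j" by blast
  qed (auto simp: W_def)
  show ?thesis unfolding tm_def uh_mult_word xi_H_def G_def using iff by auto
qed

lemma W_inj: "W a j = W a' j' \<Longrightarrow> a = a' \<and> j = j'"
proof -
  assume h: "W a j = W a' j'"
  have "length (filter (\<lambda>g. g = Xp) (W a j)) = length (filter (\<lambda>g. g = Xp) (W a' j'))"
    "length (filter (\<lambda>g. g = Hg) (W a j)) = length (filter (\<lambda>g. g = Hg) (W a' j'))" using h by simp_all
  thus ?thesis by (simp add: W_def u_def filter_replicate)
qed

lemma len_W: "length (W a j) = length (u a) + j" by (simp add: W_def)

lemma tm_W: "tm a (W a' j) = (if a = a' then G a j else 0)"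
  using W_inj by (auto simp: tm_eq len_W)

lemma tm_zero_len: "length w < a \<Longrightarrow> tm a w = 0"
  by (auto simp: tm_eq len_W len_u)

lemma tm_supp: "dp \<le> a \<Longrightarrow> tm a w $ i \<noteq> 0 \<Longrightarrow> \<exists>j. w = W a j \<and> a < Kb i \<and> j \<le> Db i"
proof -
  assume a: "dp \<le> a" and nz: "tm a w $ i \<noteq> 0"
  then obtain j where w: "w = W a j" by (auto simp: tm_eq split: if_splits)
  hence c: "coeff (xi_poly \<xi> a i) j \<noteq> 0" using nz by (simp add: tm_W G_nth)
  hence "xi_poly \<xi> a i \<noteq> 0" by auto
  hence "a < Kb i" using xi_poly_zero by (meson not_le)
  moreover have "j \<le> Db i" using le_degree[OF c] xi_poly_deg[OF a, of i] by linarith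
  ultimately show ?thesis using w by blast
qed

lemma ps_eq: "partial_sum d \<xi> N w = (\<Sum>a\<in>{dp..N}. tm a w)"
  by (simp add: partial_sum_def tm_def u_def)

definition KK :: "nat \<Rightarrow> nat" where "KK N = (\<Sum>i\<le>N. Kb i)"
definition DD :: "nat \<Rightarrow> nat" where "DD N = (\<Sum>i\<le>N. Db i)"

lemma KK_ge: "i \<le> N \<Longrightarrow> Kb i \<le> KK N"
  unfolding KK_def by (rule member_le_sum) auto
lemma DD_ge: "i \<le> N \<Longrightarrow> Db i \<le> DD N"
  unfolding DD_def by (rule member_le_sum) auto

lemma ps_supp: "{w. \<exists>i\<le>N. partial_sum d \<xi> (M w) w $ i \<noteq> 0} \<subseteq> (\<lambda>(a, j). W a j) ` ({dp..<KK N} \<times> {..DD N})"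
proof
  fix w assume "w \<in> {w. \<exists>i\<le>N. partial_sum d \<xi> (M w) w $ i \<noteq> 0}"
  then obtain i where i: "i \<le> N" "partial_sum d \<xi> (M w) w $ i \<noteq> 0" by blast
  hence "(\<Sum>a\<in>{dp..M w}. tm a w $ i) \<noteq> 0" by (simp add: ps_eq fps_sum_nth)
  then obtain a where a: "a \<in> {dp..M w}" "tm a w $ i \<noteq> 0"
    by (meson sum.not_neutral_contains_not_neutral)
  then obtain j where j: "w = W a j" "a < Kb i" "j \<le> Db i" using tm_supp[of a w i] by auto
  have "a < KK N" using j(2) KK_ge[OF i(1)] by linarith
  moreover have "j \<le> DD N" using j(3) DD_ge[OF i(1)] by linarith
  ultimately show "w \<in> (\<lambda>(a, j). W a j) ` ({dp..<KK N} \<times> {..DD N})" using a(1) j(1) by force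
qed

lemma ps_elem: "uh_elem (\<lambda>w. partial_sum d \<xi> (M w) w)"
  unfolding uh_elem_def
proof
  fix m
  have "{w. partial_sum d \<xi> (M w) w $ m \<noteq> 0} \<subseteq> {w. \<exists>i\<le>m. partial_sum d \<xi> (M w) w $ i \<noteq> 0}" by auto
  also note ps_supp[of m M]
  finally show "finite {w. partial_sum d \<xi> (M w) w $ m \<noteq> 0}" by (rule finite_subset) auto
qed

definition cl :: "gen list \<Rightarrow> 'k fps" where "cl w = partial_sum d \<xi> (length w) w"

lemma cl_elem: "uh_elem cl"
  using ps_elem[of length] unfolding cl_def[abs_def] .

lemma ps_stable:
  assumes "N1 \<le> N2" "\<And>a. N1 < a \<Longrightarrow> a \<le> N2 \<Longrightarrow> tm a w $ i = 0"
  shows "partial_sum d \<xi> N1 w $ i = partial_sum d \<xi> N2 w $ i"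
proof -
  have "(\<Sum>a\<in>{dp..N1}. tm a w $ i) = (\<Sum>a\<in>{dp..N2}. tm a w $ i)"
    by (rule sum.mono_neutral_left) (use assms in auto)
  thus ?thesis by (simp add: ps_eq fps_sum_nth)
qed

lemma cl_coeff:
  assumes "KK m \<le> N" "i < m"
  shows "cl w $ i = partial_sum d \<xi> N w $ i"
proof -
  let ?M = "max (length w) N"
  have "cl w $ i = partial_sum d \<xi> ?M w $ i"
    unfolding cl_def by (rule ps_stable) (auto simp: tm_zero_len)
  moreover have "partial_sum d \<xi> N w $ i = partial_sum d \<xi> ?M w $ i"
  proof (rule ps_stable)
    fix a assume a: "N < a" "a \<le> ?M"
    have "Kb i \<le> KK m" using KK_ge[of i m] assms(2) by simp
    hence "Kb i \<le> a" using a assms(1) by linarith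
    moreover have "dp \<le> a" using Kb_ge[of i] \<open>Kb i \<le> a\<close> by linarith
    ultimately show "tm a w $ i = 0" using tm_supp by force
  qed simp
  ultimately show ?thesis by simp
qed

lemma cl_hadic: "hadic_conv \<psi> (\<lambda>N. uh_mat \<psi> (partial_sum d \<xi> N)) (uh_mat \<psi> cl)"
  unfolding hadic_conv_def
proof (intro allI exI[of _ "KK _"] impI)
  fix m N assume N: "KK m \<le> N"
  define c' where "c' w = Abs_fps (\<lambda>i. (cl w - partial_sum d \<xi> N w) $ (i + m))" for w
  have decomp: "cl = (\<lambda>w. partial_sum d \<xi> N w + fps_X ^ m * c' w)"
  proof (intro ext fps_ext)
    fix w i
    show "cl w $ i = (partial_sum d \<xi> N w + fps_X ^ m * c' w) $ i"
    proof (cases "i < m")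
      case True thus ?thesis using cl_coeff[OF N True] by (simp add: fps_X_power_mult_nth)
    next
      case False thus ?thesis by (simp add: fps_X_power_mult_nth c'_def)
    qed
  qed
  have e1: "uh_elem (\<lambda>w. partial_sum d \<xi> N w)" using ps_elem[of "\<lambda>_. N"] .
  have e2: "uh_elem c'"
    unfolding uh_elem_def
  proof
    fix i
    have "{w. c' w $ i \<noteq> 0} \<subseteq> {w. cl w $ (i + m) \<noteq> 0} \<union> {w. partial_sum d \<xi> N w $ (i + m) \<noteq> 0}"
      by (auto simp: c'_def)
    moreover have "finite {w. cl w $ (i + m) \<noteq> 0}" using cl_elem by (simp add: uh_elem_def)
    moreover have "finite {w. partial_sum d \<xi> N w $ (i + m) \<noteq> 0}" using e1 by (simp add: uh_elem_def)
    ultimately show "finite {w. c' w $ i \<noteq> 0}" by (meson finite_Un finite_subset)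
  qed
  have "\<forall>n k l. uh_mat \<psi> cl n k l - uh_mat \<psi> (partial_sum d \<xi> N) n k l = fps_X ^ m * uh_mat \<psi> c' n k l"
  proof (intro allI)
    fix n k l
    have "uh_mat \<psi> cl n k l = uh_mat \<psi> (\<lambda>w. partial_sum d \<xi> N w + fps_X ^ m * c' w) n k l"
      using decomp by simp
    also have "\<dots> = uh_mat \<psi> (partial_sum d \<xi> N) n k l + fps_X ^ m * uh_mat \<psi> c' n k l"
      using uh_mat_combo[OF e1 e2] by simp
    finally show "uh_mat \<psi> cl n k l - uh_mat \<psi> (partial_sum d \<xi> N) n k l = fps_X ^ m * uh_mat \<psi> c' n k l"
      by simp
  qed
  moreover have "uh_mat \<psi> c' \<in> Uh_psi \<psi>" using e2 unfolding Uh_psi_def by blast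
  ultimately show "\<exists>y\<in>Uh_psi \<psi>. \<forall>n k l. uh_mat \<psi> cl n k l - uh_mat \<psi> (partial_sum d \<xi> N) n k l = fps_X ^ m * y n k l"
    by blast
qed

lemma word_act_W: "word_act \<psi> n (W a j) k =
  (if a \<le> k then (of_int (n - 2 * int k) ^ j * (\<Prod>b\<in>{k - a + 1..k}. \<psi> b n), k - a + nat (int a - d))
   else (0, nat (int a - d)))"
proof -
  have e: "word_act \<psi> n (W a j) k = foldr (gen_act \<psi> n) (replicate (nat (int a - d)) Xm)
     (foldr (gen_act \<psi> n) (replicate a Xp) (foldr (gen_act \<psi> n) (replicate j Hg) (1, k)))"
    by (simp only: word_act_def W_def u_def foldr_append o_apply)
  show ?thesis
  proof (cases "a \<le> k")
    case True
    have "foldr (gen_act \<psi> n) (replicate a Xp) (foldr (gen_act \<psi> n) (replicate j Hg) (1, k))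
       = (of_int (n - 2 * int k) ^ j * (\<Prod>b\<in>{k - a + 1..k}. \<psi> b n), k - a)"
      by (simp only: foldr_Hg foldr_Xp) (simp add: True)
    thus ?thesis using True e by (simp only: foldr_Xm) simp
  next
    case False
    have "foldr (gen_act \<psi> n) (replicate a Xp) (foldr (gen_act \<psi> n) (replicate j Hg) (1, k))
       = (0, 0)"
      by (simp only: foldr_Hg foldr_Xp) (simp add: False)
    thus ?thesis using False e by (simp only: foldr_Xm) simp
  qed
qed

lemma cl_W: "dp \<le> a \<Longrightarrow> cl (W a j) = G a j"
proof -
  assume a: "dp \<le> a"
  have "cl (W a j) = (\<Sum>a'\<in>{dp..length (W a j)}. tm a' (W a j))" by (simp add: cl_def ps_eq)
  also have "\<dots> = (\<Sum>a'\<in>{dp..length (W a j)}. if a' = a then G a j else 0)"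
    by (rule sum.cong) (auto simp: tm_W)
  also have "\<dots> = G a j" using a by (simp add: len_W len_u)
  finally show ?thesis .
qed

lemma mult_trunc:
  assumes "\<And>i. i \<le> N \<Longrightarrow> F $ i = F' $ i"
  shows "(P * F) $ N = (P * F') $ N"
  unfolding fps_mult_nth by (rule sum.cong) (auto simp: assms)

lemma S_coeff:
  assumes a: "dp \<le> a" and i: "i \<le> N"
  shows "(\<Sum>j\<le>DD N. G a j * of_int z ^ j) $ i = \<xi> a z $ i"
proof -
  have deg: "degree (xi_poly \<xi> a i) \<le> DD N" using xi_poly_deg[OF a, of i] DD_ge[OF i] by linarith
  have "(\<Sum>j\<le>DD N. G a j * of_int z ^ j) $ i = (\<Sum>j\<le>DD N. coeff (xi_poly \<xi> a i) j * of_int z ^ j)"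
    by (simp add: fps_sum_nth G_nth fps_of_int[symmetric])
  also have "\<dots> = (\<Sum>j\<le>degree (xi_poly \<xi> a i). coeff (xi_poly \<xi> a i) j * of_int z ^ j)"
    by (rule sum.mono_neutral_right) (use deg in \<open>auto simp: coeff_eq_0\<close>)
  also have "\<dots> = poly (xi_poly \<xi> a i) (of_int z)" by (simp add: poly_altdef)
  also have "\<dots> = \<xi> a z $ i" using xi_poly_eval[OF a] by simp
  finally show ?thesis .
qed

lemma cl_eval: "uh_mat \<psi> cl n k l = (if int l = int k - d then ltimes \<psi> dp \<xi> k n else 0)"
proof (rule fps_ext)
  fix N
  define K where "K = max (KK N) (Suc k)"
  define D where "D = DD N"
  define t :: "'k fps" where "t = of_int (n - 2 * int k)"
  define P where "P a = (\<Prod>b\<in>{k - a + 1..k}. \<psi> b n)" for a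
  define C where "C = (int l = int k - d)"
  define F where "F w = (if snd (word_act \<psi> n w k) = l then (cl w * fst (word_act \<psi> n w k)) $ N else 0)" for w
  let ?I = "{dp..<K} \<times> {..D}"
  let ?h = "\<lambda>(a, j). W a j"
  have inj: "inj_on ?h ?I" using W_inj by (auto simp: inj_on_def)
  have "{w. \<exists>i\<le>N. cl w $ i \<noteq> 0} \<subseteq> ?h ` ({dp..<KK N} \<times> {..DD N})"
    using ps_supp[of N length] by (simp add: cl_def)
  also have "\<dots> \<subseteq> ?h ` ?I" by (rule image_mono) (auto simp: K_def D_def)
  finally have sup: "{w. \<exists>i\<le>N. cl w $ i \<noteq> 0} \<subseteq> ?h ` ?I" .
  have "uh_mat \<psi> cl n k l $ N = (\<Sum>w\<in>?h ` ?I. F w)"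
    unfolding F_def by (rule uh_mat_nth) (use sup in auto)
  also have "\<dots> = (\<Sum>p\<in>?I. F (W (fst p) (snd p)))"
    by (subst sum.reindex[OF inj]) (simp add: split_def comp_def)
  also have "\<dots> = (\<Sum>a\<in>{dp..<K}. \<Sum>j\<le>D. F (W a j))"
    by (simp add: sum.cartesian_product split_def)
  also have "\<dots> = (\<Sum>a\<in>{dp..<K}. if a \<le> k \<and> C then (P a * \<xi> a (n - 2 * int k)) $ N else 0)"
  proof (rule sum.cong[OF refl])
    fix a assume "a \<in> {dp..<K}"
    hence a: "dp \<le> a" by simp
    have dle: "d \<le> int a" using a by linarith
    have Fw: "F (W a j) = (if a \<le> k \<and> C then (P a * (G a j * t ^ j)) $ N else 0)" for j
    proof (cases "a \<le> k")
      case True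
      have s: "(k - a + nat (int a - d) = l) = C" unfolding C_def using True dle by auto
      show ?thesis using True s unfolding F_def
        by (simp add: word_act_W cl_W[OF a] P_def t_def mult.commute mult.left_commute)
    next
      case False thus ?thesis unfolding F_def by (simp add: word_act_W)
    qed
    show "(\<Sum>j\<le>D. F (W a j)) = (if a \<le> k \<and> C then (P a * \<xi> a (n - 2 * int k)) $ N else 0)"
    proof (cases "a \<le> k \<and> C")
      case True
      have "(\<Sum>j\<le>D. F (W a j)) = (\<Sum>j\<le>D. (P a * (G a j * t ^ j)) $ N)" using True Fw by simp
      also have "\<dots> = (P a * (\<Sum>j\<le>D. G a j * t ^ j)) $ N" by (simp add: fps_sum_nth sum_distrib_left)
      also have "\<dots> = (P a * \<xi> a (n - 2 * int k)) $ N"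
        by (rule mult_trunc) (unfold D_def t_def, erule S_coeff[OF a])
      finally show ?thesis using True by simp
    next
      case False
      have "F (W a j) = 0" for j by (subst Fw) (use False in auto)
      thus ?thesis using False by auto
    qed
  qed
  also have "\<dots> = (if C then (\<Sum>a\<in>{dp..k}. (P a * \<xi> a (n - 2 * int k)) $ N) else 0)"
  proof (cases C)
    case True
    have "(\<Sum>a\<in>{dp..<K}. if a \<le> k then (P a * \<xi> a (n - 2 * int k)) $ N else 0)
        = (\<Sum>a\<in>{a\<in>{dp..<K}. a \<le> k}. (P a * \<xi> a (n - 2 * int k)) $ N)"
      by (rule sum.inter_filter[symmetric]) simp
    moreover have "{a\<in>{dp..<K}. a \<le> k} = {dp..k}" by (auto simp: K_def)
    ultimately show ?thesis using True by simp
  qed simp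
  also have "\<dots> = (if C then ltimes \<psi> dp \<xi> k n else 0) $ N"
    by (simp add: ltimes_def fps_sum_nth P_def)
  finally show "uh_mat \<psi> cl n k l $ N = (if int l = int k - d then ltimes \<psi> dp \<xi> k n else 0) $ N"
    by (simp add: C_def)
qed

end

theorem mainTheorem5:
  fixes \<psi> :: "nat \<Rightarrow> int \<Rightarrow> 'k::field_char_0 fps"
    and d :: int
    and \<xi> :: "nat \<Rightarrow> int \<Rightarrow> 'k fps"
  assumes "colouring \<psi>"
    and "regular_seq (nat (max d 0)) \<xi>"
    and "summable_seq (nat (max d 0)) \<xi>"
  shows "(\<exists>!x. x \<in> Uh_psi \<psi> \<and> hadic_conv \<psi> (\<lambda>N. uh_mat \<psi> (partial_sum d \<xi> N)) x)
       \<and> (\<forall>x. x \<in> Uh_psi \<psi> \<and> hadic_conv \<psi> (\<lambda>N. uh_mat \<psi> (partial_sum d \<xi> N)) x \<longrightarrow>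
            of_degree x d \<and>
            (\<forall>k n. k \<ge> nat (max d 0) \<longrightarrow>
               ltimes \<psi> (nat (max d 0)) \<xi> k n = psi_of x d k n))"
proof -
  interpret ctx5 \<psi> d \<xi> using assms(2,3) by unfold_locales
  let ?S = "\<lambda>N. uh_mat \<psi> (partial_sum d \<xi> N)"
  have x0: "uh_mat \<psi> cl \<in> Uh_psi \<psi>" using cl_elem unfolding Uh_psi_def by blast
  have uniq: "x = uh_mat \<psi> cl" if "x \<in> Uh_psi \<psi> \<and> hadic_conv \<psi> ?S x" for x
    using hadic_unique cl_hadic that by blast
  have ev: "of_degree (uh_mat \<psi> cl) d \<and> (\<forall>k n. k \<ge> nat (max d 0) \<longrightarrow>
               ltimes \<psi> (nat (max d 0)) \<xi> k n = psi_of (uh_mat \<psi> cl) d k n)"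
  proof
    show "of_degree (uh_mat \<psi> cl) d"
      unfolding of_degree_def cl_eval by (auto simp: ltimes_def)
    show "\<forall>k n. k \<ge> nat (max d 0) \<longrightarrow> ltimes \<psi> (nat (max d 0)) \<xi> k n = psi_of (uh_mat \<psi> cl) d k n"
    proof (intro allI impI)
      fix k n assume k: "nat (max d 0) \<le> k"
      hence "int (nat (int k - d)) = int k - d" by linarith
      thus "ltimes \<psi> (nat (max d 0)) \<xi> k n = psi_of (uh_mat \<psi> cl) d k n"
        unfolding psi_of_def cl_eval by simp
    qed
  qed
  show ?thesis
  proof
    show "\<exists>!x. x \<in> Uh_psi \<psi> \<and> hadic_conv \<psi> ?S x"
      using x0 cl_hadic uniq by blast
    show "\<forall>x. x \<in> Uh_psi \<psi> \<and> hadic_conv \<psi> ?S x \<longrightarrow> of_degree x d \<and>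
            (\<forall>k n. k \<ge> nat (max d 0) \<longrightarrow> ltimes \<psi> (nat (max d 0)) \<xi> k n = psi_of x d k n)"
      using uniq ev by blast
  qed
qed

end
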